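(* (a) For $f(x_0,x_1;\alpha)=\tfrac12\log F(x_0,x_1;\alpha)$ one has $\partial f(x_0,x_1;\alpha)/\partial x_1=\partial f(x_1,x_0;\alpha)/\partial x_0$; hence, locally, there is a function $\Lambda(x_0,x_1;\alpha)$ with $\Lambda(x_0,x_1;\alpha)=\Lambda(x_1,x_0;\alpha)$ and $\partial\Lambda(x_0,x_1;\alpha)/\partial x_0=f(x_0,x_1;\alpha)$. (b) Let $\Gamma$ be a finite planar quad-graph with bipartite (black/white) vertex coloring and an edge labelling by complex parameters such that opposite edges of every face carry equal labels. For each face, list its vertices counterclockwise as $(x_0,x_1,x_2,x_3)$ with $x_0,x_2$ black, let $\alpha$ be the label of the edges $x_0x_1,x_2x_3$ and $\beta$ that of $x_0x_3,x_1x_2$, and associate to it the term $\Lambda(x_0,x_2;\alpha-\beta)$ (this does not depend on which black vertex is called $x_0$). Let $S=\sum_{\text{faces}}\Lambda(x_0,x_2;\alpha-\beta)$, a function of the fields on black vertices. Let $x_0$ be an interior black vertex with $n$ adjacent faces $(x_0,x_{2j-1},x_{2j},x_{2j+1})$, $j=1,\dots,n$, listed counterclockwise (indices of the white vertices mod $2n$), and let $\alpha_j$ be the label of the edge $(x_0,x_{2j-1})$, $\alpha_{n+1}=\alpha_1$. Then $$\frac{\partial S}{\partial x_0}=\sum_{j=1}^n f(x_0,x_{2j};\alpha_j-\alpha_{j+1}),$$ so the discrete Toda equations $\sum_{j=1}^n f(x_0,x_{2j};\alpha_j-\alpha_{j+1})=0$ at interior black vertices are the Euler–Lagrange equations of 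$S$.
   Context: $\sigma$: Weierstrass sigma function (invariants $g_2,g_3$, nondegenerate). $F(x_0,x_1;\alpha)=\frac{\sigma(x_0+x_1+\alpha)\sigma(x_0-x_1+\alpha)}{\sigma(x_0+x_1-\alpha)\sigma(x_0-x_1-\alpha)}$, and $f=\frac12\log F$ (a local branch). *)

theory Defs
  imports "HOL-Analysis.Analysis"
begin

text \<open>Period lattice generated by \<omega>1, \<omega>2; nondegenerate means Im(\<omega>2/\<omega>1) \<noteq> 0.
  Every nondegenerate pair of invariants g2, g3 arises from such a lattice.\<close>

definition nondeg_periods :: "complex \<Rightarrow> complex \<Rightarrow> bool" where
  "nondeg_periods \<omega>1 \<omega>2 \<longleftrightarrow> Im (\<omega>2 / \<omega>1) \<noteq> 0"

definition wsigma :: "complex \<Rightarrow> complex \<Rightarrow> complex \<Rightarrow> complex" where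
  "wsigma \<omega>1 \<omega>2 z =
     lim (\<lambda>N::nat. z * (\<Prod>(m, n) \<in> ({- int N..int N} \<times> {- int N..int N}) - {(0, 0)}.
        (1 - z / (of_int m * \<omega>1 + of_int n * \<omega>2)) *
        exp (z / (of_int m * \<omega>1 + of_int n * \<omega>2)
             + z ^ 2 / (2 * (of_int m * \<omega>1 + of_int n * \<omega>2) ^ 2))))"

definition bigF :: "complex \<Rightarrow> complex \<Rightarrow> complex \<Rightarrow> complex \<times> complex \<Rightarrow> complex" where
  "bigF \<omega>1 \<omega>2 \<alpha> p =
     (wsigma \<omega>1 \<omega>2 (fst p + snd p + \<alpha>) * wsigma \<omega>1 \<omega>2 (fst p - snd p + \<alpha>)) /
     (wsigma \<omega>1 \<omega>2 (fst p + snd p - \<alpha>) * wsigma \<omega>1 \<omega>2 (fst p - snd p - \<alpha>))"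

text \<open>f is a (continuous, hence holomorphic) branch of (1/2) log F on the open set U,
  on which F is finite and nonzero (F \<noteq> 0 here also forces the denominator to be \<noteq> 0).\<close>

definition half_log_branch ::
  "complex \<Rightarrow> complex \<Rightarrow> complex \<Rightarrow> (complex \<times> complex) set \<Rightarrow> (complex \<times> complex \<Rightarrow> complex) \<Rightarrow> bool" where
  "half_log_branch \<omega>1 \<omega>2 \<alpha> U f \<longleftrightarrow>
     open U \<and> continuous_on U f \<and>
     (\<forall>p\<in>U. bigF \<omega>1 \<omega>2 \<alpha> p \<noteq> 0 \<and> exp (2 * f p) = bigF \<omega>1 \<omega>2 \<alpha> p)"

text \<open>Quad-graph data: faces are stored as 4-tuples (x0,x1,x2,x3) listed counterclockwise,
  with x0 black; each face is stored once (not also in its rotated form (x2,x3,x0,x1)).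
  lab is the edge labelling (symmetric in its arguments).\<close>

definition quad_faces ::
  "('v \<times> 'v \<times> 'v \<times> 'v) set \<Rightarrow> ('v \<Rightarrow> bool) \<Rightarrow> ('v \<Rightarrow> 'v \<Rightarrow> complex) \<Rightarrow> bool" where
  "quad_faces Q black lab \<longleftrightarrow>
     finite Q \<and> (\<forall>x y. lab x y = lab y x) \<and>
     (\<forall>(a, b, c, d) \<in> Q. black a \<and> \<not> black b \<and> black c \<and> \<not> black d \<and>
        distinct [a, b, c, d] \<and> lab a b = lab c d \<and> lab a d = lab b c \<and>
        (c, d, a, b) \<notin> Q)"

definition interior_star ::
  "('v \<times> 'v \<times> 'v \<times> 'v) set \<Rightarrow> 'v \<Rightarrow> nat \<Rightarrow> (nat \<Rightarrow> 'v) \<Rightarrow> bool" where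
  "interior_star Q v n w \<longleftrightarrow>
     n \<ge> 1 \<and> w (2 * n + 1) = w 1 \<and>
     (\<exists>\<phi>. bij_betw \<phi> {1..n} {q \<in> Q. fst q = v \<or> fst (snd (snd q)) = v} \<and>
        (\<forall>j\<in>{1..n}. \<phi> j = (v, w (2*j - 1), w (2*j), w (2*j + 1)) \<or>
                     \<phi> j = (w (2*j), w (2*j + 1), v, w (2*j - 1))))"

definition action ::
  "(complex \<Rightarrow> complex \<times> complex \<Rightarrow> complex) \<Rightarrow> ('v \<Rightarrow> 'v \<Rightarrow> complex) \<Rightarrow>
   ('v \<times> 'v \<times> 'v \<times> 'v) set \<Rightarrow> ('v \<Rightarrow> complex) \<Rightarrow> complex" where
  "action Lam lab Q X = (\<Sum>(a, b, c, d) \<in> Q. Lam (lab a b - lab a d) (X a, X c))"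

end

theory Submission
  imports Defs "HOL-Complex_Analysis.Complex_Analysis"
begin

lemma lattice_lower:
  assumes "nondeg_periods \<omega>1 \<omega>2"
  obtains c where "c > 0"
    "\<And>m n. c * \<bar>real_of_int m\<bar> \<le> norm (of_int m * \<omega>1 + of_int n * \<omega>2)"
    "\<And>m n. c * \<bar>real_of_int n\<bar> \<le> norm (of_int m * \<omega>1 + of_int n * \<omega>2)"
proof -
  define D where "D = Im (\<omega>2 * cnj \<omega>1)"
  have w1: "\<omega>1 \<noteq> 0" using assms by (auto simp: nondeg_periods_def)
  have "Im (\<omega>2 / \<omega>1) = D / (cmod \<omega>1)^2"
    by (simp add: D_def Im_divide cmod_power2)
  hence D: "D \<noteq> 0" using assms by (auto simp: nondeg_periods_def)
  hence w2: "\<omega>2 \<noteq> 0" by (auto simp: D_def)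
  define c where "c = \<bar>D\<bar> / (norm \<omega>1 + norm \<omega>2)"
  have cpos: "c > 0" using D w1 w2 by (simp add: c_def add_pos_pos)
  have A: "c * \<bar>real_of_int n\<bar> \<le> norm (of_int m * \<omega>1 + of_int n * \<omega>2)" for m n
  proof -
    let ?x = "of_int m * \<omega>1 + of_int n * \<omega>2"
    have "Im (?x * cnj \<omega>1) = of_int n * D" by (simp add: D_def algebra_simps)
    hence "\<bar>real_of_int n\<bar> * \<bar>D\<bar> \<le> norm ?x * norm \<omega>1"
      by (metis abs_Im_le_cmod abs_mult complex_mod_cnj norm_mult)
    also have "\<dots> \<le> norm ?x * (norm \<omega>1 + norm \<omega>2)" by (intro mult_left_mono) auto
    finally have *: "\<bar>D\<bar> * \<bar>real_of_int n\<bar> \<le> norm ?x * (norm \<omega>1 + norm \<omega>2)" by (simp add: mult.commute)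
    have pos: "0 < norm \<omega>1 + norm \<omega>2" using w1 by (simp add: add_pos_nonneg)
    show ?thesis unfolding c_def using * pos by (simp add: pos_divide_le_eq mult.commute)
  qed
  have B: "c * \<bar>real_of_int m\<bar> \<le> norm (of_int m * \<omega>1 + of_int n * \<omega>2)" for m n
  proof -
    let ?x = "of_int m * \<omega>1 + of_int n * \<omega>2"
    have "Im (?x * cnj \<omega>2) = - of_int m * D" by (simp add: D_def algebra_simps)
    hence "\<bar>real_of_int m\<bar> * \<bar>D\<bar> \<le> norm ?x * norm \<omega>2"
      by (metis abs_Im_le_cmod abs_minus_cancel abs_mult complex_mod_cnj norm_mult mult_minus_left)
    also have "\<dots> \<le> norm ?x * (norm \<omega>1 + norm \<omega>2)" by (intro mult_left_mono) auto
    finally have *: "\<bar>D\<bar> * \<bar>real_of_int m\<bar> \<le> norm ?x * (norm \<omega>1 + norm \<omega>2)" by (simp add: mult.commute)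
    have pos: "0 < norm \<omega>1 + norm \<omega>2" using w1 by (simp add: add_pos_nonneg)
    show ?thesis unfolding c_def using * pos by (simp add: pos_divide_le_eq mult.commute)
  qed
  show ?thesis using cpos A B that by blast
qed

definition latt :: "complex \<Rightarrow> complex \<Rightarrow> int \<times> int \<Rightarrow> complex" where
  "latt \<omega>1 \<omega>2 q = of_int (fst q) * \<omega>1 + of_int (snd q) * \<omega>2"
definition sqr :: "nat \<Rightarrow> (int \<times> int) set" where
  "sqr N = {- int N..int N} \<times> {- int N..int N}"
definition Efac :: "complex \<Rightarrow> complex \<Rightarrow> complex" where
  "Efac z w = (1 - z / w) * exp (z / w + z ^ 2 / (2 * w ^ 2))"
definition Qp :: "complex \<Rightarrow> complex \<Rightarrow> nat \<Rightarrow> complex \<Rightarrow> complex" where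
  "Qp \<omega>1 \<omega>2 N z = (\<Prod>q\<in>sqr N - {(0,0)}. Efac z (latt \<omega>1 \<omega>2 q))"
definition hring :: "complex \<Rightarrow> complex \<Rightarrow> nat \<Rightarrow> complex \<Rightarrow> complex" where
  "hring \<omega>1 \<omega>2 k z = (\<Prod>q\<in>sqr (Suc k) - sqr k. Efac z (latt \<omega>1 \<omega>2 q))"

lemma wsigma_Qp: "wsigma \<omega>1 \<omega>2 z = lim (\<lambda>N. z * Qp \<omega>1 \<omega>2 N z)"
  unfolding wsigma_def Qp_def sqr_def latt_def Efac_def case_prod_unfold by (rule refl)

lemma finite_sqr [simp]: "finite (sqr N)" by (simp add: sqr_def)

lemma sqr_mono: "sqr N \<subseteq> sqr (Suc N)" by (auto simp: sqr_def)

lemma sqr_0: "sqr 0 = {(0,0)}" by (auto simp: sqr_def)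

lemma Qp_ring: "Qp \<omega>1 \<omega>2 N z = (\<Prod>k<N. hring \<omega>1 \<omega>2 k z)"
proof (induction N)
  case 0
  then show ?case by (simp add: Qp_def sqr_0)
next
  case (Suc N)
  have "sqr (Suc N) - {(0,0)} = (sqr N - {(0,0)}) \<union> (sqr (Suc N) - sqr N)"
    using sqr_mono[of N] by (auto simp: sqr_def)
  hence "Qp \<omega>1 \<omega>2 (Suc N) z = Qp \<omega>1 \<omega>2 N z * hring \<omega>1 \<omega>2 N z"
    unfolding Qp_def hring_def by (subst prod.union_disjoint[symmetric]) auto
  with Suc show ?case by simp
qed

lemma card_ring: "card (sqr (Suc k) - sqr k) = 8 * k + 8"
proof -
  have c: "card (sqr N) = (2 * N + 1)^2" for N
  proof -
    have "card {- int N..int N} = 2 * N + 1" by simp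
    thus ?thesis by (simp add: sqr_def card_cartesian_product power2_eq_square)
  qed
  have "card (sqr (Suc k) - sqr k) = card (sqr (Suc k)) - card (sqr k)"
    by (rule card_Diff_subset) (auto simp: sqr_mono)
  also have "\<dots> = 8 * k + 8" unfolding c by (simp add: power2_eq_square algebra_simps)
  finally show ?thesis .
qed

lemma ring_norm:
  assumes "c > 0"
    "\<And>m n. c * \<bar>real_of_int m\<bar> \<le> norm (of_int m * \<omega>1 + of_int n * \<omega>2)"
    "\<And>m n. c * \<bar>real_of_int n\<bar> \<le> norm (of_int m * \<omega>1 + of_int n * \<omega>2)"
    "q \<in> sqr (Suc k) - sqr k"
  shows "c * (real k + 1) \<le> norm (latt \<omega>1 \<omega>2 q)"
proof -
  obtain m n where q: "q = (m, n)" by force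
  have "\<not> (- int k \<le> m \<and> m \<le> int k \<and> - int k \<le> n \<and> n \<le> int k)"
    using assms(4) by (simp add: sqr_def q)
  hence "\<bar>m\<bar> \<ge> int k + 1 \<or> \<bar>n\<bar> \<ge> int k + 1" by arith
  hence "real_of_int (int k + 1) \<le> real_of_int \<bar>m\<bar> \<or> real_of_int (int k + 1) \<le> real_of_int \<bar>n\<bar>"
    unfolding of_int_le_iff .
  hence "\<bar>real_of_int m\<bar> \<ge> real k + 1 \<or> \<bar>real_of_int n\<bar> \<ge> real k + 1"
    by simp
  thus ?thesis
  proof
    assume "\<bar>real_of_int m\<bar> \<ge> real k + 1"
    hence "c * (real k + 1) \<le> c * \<bar>real_of_int m\<bar>" using assms(1) by simp
    also have "\<dots> \<le> norm (latt \<omega>1 \<omega>2 q)" using assms(2) by (simp add: latt_def q)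
    finally show ?thesis .
  next
    assume "\<bar>real_of_int n\<bar> \<ge> real k + 1"
    hence "c * (real k + 1) \<le> c * \<bar>real_of_int n\<bar>" using assms(1) by simp
    also have "\<dots> \<le> norm (latt \<omega>1 \<omega>2 q)" using assms(3) by (simp add: latt_def q)
    finally show ?thesis .
  qed
qed

lemma sum_12: "(\<Sum>k=1..2. (u::complex) ^ k / of_nat k) = u + u^2/2"
proof -
  have "{1..2::nat} = {1,2}" by auto
  thus ?thesis by simp
qed

lemma Efac_weierstrass: "Efac z w = weierstrass_factor 2 (z / w)"
  unfolding Efac_def weierstrass_factor_def sum_12 by (simp add: power_divide mult.commute)

lemma Efac_bound: "norm (z / w) \<le> 1/2 \<Longrightarrow> norm (Efac z w - 1) \<le> 3 * norm (z / w) ^ 3"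
  using weierstrass_factor_bound[of "z/w" 2] by (simp add: Efac_weierstrass numeral_3_eq_3)

lemma norm_prod_minus1_le_prod_minus1':
  fixes f :: "'b \<Rightarrow> complex"
  shows "norm (prod (\<lambda>n. 1 + f n) A - 1) \<le> prod (\<lambda>n. 1 + norm (f n)) A - 1"
proof (induction A rule: infinite_finite_induct)
  case (insert x A)
  from insert.hyps have 
    "norm ((\<Prod>n\<in>insert x A. 1 + f n) - 1) = 
       norm ((\<Prod>n\<in>A. 1 + f n) - 1 + f x * (\<Prod>n\<in>A. 1 + f n))"
    by (simp add: algebra_simps)
  also have "\<dots> \<le> norm ((\<Prod>n\<in>A. 1 + f n) - 1) + norm (f x * (\<Prod>n\<in>A. 1 + f n))"
    by (rule norm_triangle_ineq)
  also have "norm (f x * (\<Prod>n\<in>A. 1 + f n)) = norm (f x) * (\<Prod>x\<in>A. norm (1 + f x))"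
    by (simp add: prod_norm norm_mult)
  also have "(\<Prod>x\<in>A. norm (1 + f x)) \<le> (\<Prod>x\<in>A. norm (1::complex) + norm (f x))"
    by (intro prod_mono norm_triangle_ineq ballI conjI) auto
  also have "norm (1::complex) = 1" by simp
  also note insert.IH
  also have "(\<Prod>n\<in>A. 1 + norm (f n)) - 1 + norm (f x) * (\<Prod>x\<in>A. 1 + norm (f x)) =
             (\<Prod>n\<in>insert x A. 1 + norm (f n)) - 1"
    using insert.hyps by (simp add: algebra_simps)
  finally show ?case by - (simp_all add: mult_left_mono)
qed simp_all

lemma hring_bound:
  assumes c: "c > 0"
    "\<And>m n. c * \<bar>real_of_int m\<bar> \<le> norm (of_int m * \<omega>1 + of_int n * \<omega>2)"
    "\<And>m n. c * \<bar>real_of_int n\<bar> \<le> norm (of_int m * \<omega>1 + of_int n * \<omega>2)"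
    and R: "R \<ge> 0" and k: "2 * R \<le> c * (real k + 1)" and z: "norm z \<le> R"
  shows "norm (hring \<omega>1 \<omega>2 k z - 1) \<le> exp (24 * R^3 / (c^3 * (real k + 1)^2)) - 1"
proof -
  define t where "t = R / (c * (real k + 1))"
  have tpos: "t \<ge> 0" using R c by (simp add: t_def)
  have cp: "c * (real k + 1) > 0" using c by simp
  have t2: "t \<le> 1/2" using k cp unfolding t_def by (simp add: divide_le_eq)
  have qb: "norm (Efac z (latt \<omega>1 \<omega>2 q) - 1) \<le> 3 * t ^ 3" if q: "q \<in> sqr (Suc k) - sqr k" for q
  proof -
    have l: "c * (real k + 1) \<le> norm (latt \<omega>1 \<omega>2 q)" by (rule ring_norm[OF c q])
    have lpos: "c * (real k + 1) > 0" using c by simp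
    have "norm (z / latt \<omega>1 \<omega>2 q) = norm z / norm (latt \<omega>1 \<omega>2 q)" by (simp add: norm_divide)
    also have "\<dots> \<le> R / (c * (real k + 1))"
      using l lpos z R by (intro frac_le) auto
    finally have n: "norm (z / latt \<omega>1 \<omega>2 q) \<le> t" by (simp add: t_def)
    have "norm (Efac z (latt \<omega>1 \<omega>2 q) - 1) \<le> 3 * norm (z / latt \<omega>1 \<omega>2 q) ^ 3"
      using n t2 by (intro Efac_bound) auto
    also have "\<dots> \<le> 3 * t ^ 3" using n by (intro mult_left_mono power_mono) auto
    finally show ?thesis .
  qed
  have "norm (hring \<omega>1 \<omega>2 k z - 1) = 
      norm ((\<Prod>q\<in>sqr (Suc k) - sqr k. 1 + (Efac z (latt \<omega>1 \<omega>2 q) - 1)) - 1)"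
    by (simp add: hring_def)
  also have "\<dots> \<le> (\<Prod>q\<in>sqr (Suc k) - sqr k. 1 + norm (Efac z (latt \<omega>1 \<omega>2 q) - 1)) - 1"
    by (rule norm_prod_minus1_le_prod_minus1')
  also have "\<dots> \<le> exp (\<Sum>q\<in>sqr (Suc k) - sqr k. norm (Efac z (latt \<omega>1 \<omega>2 q) - 1)) - 1"
    using prod_le_exp_sum[of "sqr (Suc k) - sqr k" "\<lambda>q. norm (Efac z (latt \<omega>1 \<omega>2 q) - 1)"] by simp
  also have "(\<Sum>q\<in>sqr (Suc k) - sqr k. norm (Efac z (latt \<omega>1 \<omega>2 q) - 1)) \<le> 
             (\<Sum>q\<in>sqr (Suc k) - sqr k. 3 * t ^ 3)"
    by (intro sum_mono qb)
  also have "\<dots> = (8 * real k + 8) * (3 * t ^ 3)" by (simp add: card_ring)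
  also have "\<dots> = 24 * R^3 / (c^3 * (real k + 1)^2)"
  proof -
    have K: "real k + 1 > 0" by simp
    have "\<And>K. K > 0 \<Longrightarrow> (8 * K) * (3 * (R / (c * K)) ^ 3) = 24 * R^3 / (c^3 * K^2)"
      using c by (simp add: field_simps power2_eq_square power3_eq_cube)
    from this[OF K] show ?thesis by (simp add: t_def algebra_simps)
  qed
  finally show ?thesis by simp
qed

lemma latt_nz:
  assumes c: "c > 0"
    "\<And>m n. c * \<bar>real_of_int m\<bar> \<le> norm (of_int m * \<omega>1 + of_int n * \<omega>2)"
    "\<And>m n. c * \<bar>real_of_int n\<bar> \<le> norm (of_int m * \<omega>1 + of_int n * \<omega>2)"
    and q: "q \<noteq> (0,0)"
  shows "latt \<omega>1 \<omega>2 q \<noteq> 0"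
proof -
  obtain m n where qq: "q = (m,n)" by force
  have "m \<noteq> 0 \<or> n \<noteq> 0" using q qq by auto
  thus ?thesis
  proof
    assume "m \<noteq> 0"
    hence "0 < c * \<bar>real_of_int m\<bar>" using c by simp
    also have "\<dots> \<le> norm (latt \<omega>1 \<omega>2 q)" using c(2) by (simp add: latt_def qq)
    finally show ?thesis by auto
  next
    assume "n \<noteq> 0"
    hence "0 < c * \<bar>real_of_int n\<bar>" using c by simp
    also have "\<dots> \<le> norm (latt \<omega>1 \<omega>2 q)" using c(3) by (simp add: latt_def qq)
    finally show ?thesis by auto
  qed
qed

lemma Efac_holo: "w \<noteq> 0 \<Longrightarrow> (\<lambda>z. Efac z w) holomorphic_on A"
  unfolding Efac_def by (intro holomorphic_intros) auto

lemma Qp_unif: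
  assumes c: "c > 0"
    "\<And>m n. c * \<bar>real_of_int m\<bar> \<le> norm (of_int m * \<omega>1 + of_int n * \<omega>2)"
    "\<And>m n. c * \<bar>real_of_int n\<bar> \<le> norm (of_int m * \<omega>1 + of_int n * \<omega>2)"
    and R: "R \<ge> 0"
  shows "uniformly_convergent_on (cball 0 R) (\<lambda>N z. Qp \<omega>1 \<omega>2 N z)"
proof -
  have cont: "continuous_on (cball 0 R) (hring \<omega>1 \<omega>2 k)" for k
  proof -
    have "(\<lambda>z. \<Prod>q\<in>sqr (Suc k) - sqr k. Efac z (latt \<omega>1 \<omega>2 q)) holomorphic_on cball 0 R"
    proof (intro holomorphic_on_prod Efac_holo latt_nz[OF c])
      fix q assume "q \<in> sqr (Suc k) - sqr k"
      thus "q \<noteq> (0,0)" by (auto simp: sqr_def)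
    qed
    thus ?thesis unfolding hring_def[abs_def] by (rule holomorphic_on_imp_continuous_on)
  qed
  define C where "C = 36 * R^3 / c^3"
  define K where "K = nat (ceiling (2 * R / c + 48 * R^3 / c^3))"
  have ev: "\<forall>\<^sub>F n in sequentially. \<forall>z\<in>cball 0 R.
     norm (norm (hring \<omega>1 \<omega>2 n z - 1)) \<le> C * inverse (real (Suc n) ^ 2)"
    unfolding eventually_sequentially
  proof (intro exI allI impI ballI)
    fix n z assume n: "K \<le> n" and z: "z \<in> cball (0::complex) R"
    have nK: "2 * R / c + 48 * R^3 / c^3 \<le> real n"
      using n unfolding K_def by linarith
    have R3: "0 \<le> 48 * R^3 / c^3" using R c by simp
    have "2 * R / c \<le> real n + 1" using nK R3 by linarith
    hence k: "2 * R \<le> c * (real n + 1)" using c by (simp add: divide_le_eq mult.commute)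
    have "48 * R^3 / c^3 \<le> real n + 1" using nK R c by (smt (verit) divide_nonneg_nonneg zero_le_power)
    also have "\<dots> \<le> (real n + 1)^2" by (simp add: power2_eq_square)
    finally have h2: "48 * R^3 / c^3 \<le> (real n + 1)^2" .
    define y where "y = 24 * R^3 / (c^3 * (real n + 1)^2)"
    have y0: "y \<ge> 0" using R c by (simp add: y_def)
    have "y = (48 * R^3 / c^3) / (real n + 1)^2 / 2" by (simp add: y_def field_simps)
    also have "\<dots> \<le> 1 / 2"
    proof -
      have p: "(real n + 1)^2 > 0" by simp
      have "(48 * R^3 / c^3) / (real n + 1)^2 \<le> 1" by (subst pos_divide_le_eq[OF p]) (use h2 in simp)
      thus ?thesis by simp
    qed
    finally have y2: "y \<le> 1/2" .
    have "norm (norm (hring \<omega>1 \<omega>2 n z - 1)) \<le> exp y - 1"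
      using hring_bound[OF c R k, of z] z by (simp add: y_def)
    also have "\<dots> \<le> 3/2 * y"
      using norm_exp_bounds(2)[of y] y0 y2 by simp
    also have "\<dots> = C * inverse (real (Suc n) ^ 2)"
      by (simp add: y_def C_def field_simps)
    finally show "norm (norm (hring \<omega>1 \<omega>2 n z - 1)) \<le> C * inverse (real (Suc n) ^ 2)" .
  qed
  have summ: "summable (\<lambda>n. C * inverse (real (Suc n) ^ 2))"
  proof -
    have "summable (\<lambda>n. inverse (real n ^ 2))" by (rule inverse_power_summable) auto
    hence "summable (\<lambda>n. inverse (real (Suc n) ^ 2))"
      by (subst summable_Suc_iff)
    thus ?thesis by (rule summable_mult)
  qed
  have "uniformly_convergent_on (cball 0 R) (\<lambda>N z. \<Sum>n<N. norm (hring \<omega>1 \<omega>2 n z - 1))"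
    by (rule Weierstrass_m_test'_ev[OF ev summ])
  hence "uniformly_convergent_on (cball 0 R) (\<lambda>N z. \<Prod>n<N. hring \<omega>1 \<omega>2 n z)"
    by (intro uniformly_convergent_on_prod' cont) auto
  thus ?thesis by (simp add: Qp_ring)
qed

definition qf :: "complex \<Rightarrow> complex \<Rightarrow> complex \<Rightarrow> complex" where
  "qf \<omega>1 \<omega>2 z = lim (\<lambda>N. Qp \<omega>1 \<omega>2 N z)"

lemma Qp_ulim:
  assumes nd: "nondeg_periods \<omega>1 \<omega>2" and R: "R \<ge> 0"
  shows "uniform_limit (cball 0 R) (Qp \<omega>1 \<omega>2) (qf \<omega>1 \<omega>2) sequentially"
proof -
  obtain c where c: "c > 0"
    "\<And>m n. c * \<bar>real_of_int m\<bar> \<le> norm (of_int m * \<omega>1 + of_int n * \<omega>2)"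
    "\<And>m n. c * \<bar>real_of_int n\<bar> \<le> norm (of_int m * \<omega>1 + of_int n * \<omega>2)"
    using lattice_lower[OF nd] by blast
  have "uniformly_convergent_on (cball 0 R) (\<lambda>N z. Qp \<omega>1 \<omega>2 N z)"
    by (rule Qp_unif[OF c R])
  hence "uniform_limit (cball 0 R) (\<lambda>N z. Qp \<omega>1 \<omega>2 N z) (\<lambda>z. lim (\<lambda>N. Qp \<omega>1 \<omega>2 N z)) sequentially"
    using uniformly_convergent_uniform_limit_iff by blast
  thus ?thesis by (simp add: qf_def[abs_def])
qed

lemma Qp_tendsto:
  assumes nd: "nondeg_periods \<omega>1 \<omega>2"
  shows "(\<lambda>N. Qp \<omega>1 \<omega>2 N z) \<longlonglongrightarrow> qf \<omega>1 \<omega>2 z"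
  by (rule tendsto_uniform_limitI[OF Qp_ulim[OF nd, of "norm z"]]) auto

lemma Qp_holo:
  assumes nd: "nondeg_periods \<omega>1 \<omega>2"
  shows "Qp \<omega>1 \<omega>2 N holomorphic_on A"
proof -
  obtain c where c: "c > 0"
    "\<And>m n. c * \<bar>real_of_int m\<bar> \<le> norm (of_int m * \<omega>1 + of_int n * \<omega>2)"
    "\<And>m n. c * \<bar>real_of_int n\<bar> \<le> norm (of_int m * \<omega>1 + of_int n * \<omega>2)"
    using lattice_lower[OF nd] by blast
  have "(\<lambda>z. \<Prod>q\<in>sqr N - {(0,0)}. Efac z (latt \<omega>1 \<omega>2 q)) holomorphic_on A"
    by (intro holomorphic_on_prod Efac_holo latt_nz[OF c]) auto
  thus ?thesis unfolding Qp_def[abs_def] .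
qed

lemma qf_holo:
  assumes nd: "nondeg_periods \<omega>1 \<omega>2"
  shows "qf \<omega>1 \<omega>2 holomorphic_on UNIV"
proof (rule holomorphic_uniform_sequence[where f = "Qp \<omega>1 \<omega>2"])
  fix x :: complex
  have "uniform_limit (cball 0 (norm x + 1)) (Qp \<omega>1 \<omega>2) (qf \<omega>1 \<omega>2) sequentially"
    by (rule Qp_ulim[OF nd]) (auto intro: add_nonneg_pos)
  hence "uniform_limit (cball x 1) (Qp \<omega>1 \<omega>2) (qf \<omega>1 \<omega>2) sequentially"
    by (rule uniform_limit_on_subset) (simp add: cball_subset_cball_iff)
  thus "\<exists>d>0. cball x d \<subseteq> UNIV \<and> uniform_limit (cball x d) (Qp \<omega>1 \<omega>2) (qf \<omega>1 \<omega>2) sequentially"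
    by (intro exI[of _ 1]) auto
qed (auto intro: Qp_holo[OF nd])

lemma wsigma_eq:
  assumes nd: "nondeg_periods \<omega>1 \<omega>2"
  shows "wsigma \<omega>1 \<omega>2 z = z * qf \<omega>1 \<omega>2 z"
  unfolding wsigma_Qp by (intro limI tendsto_mult_left Qp_tendsto[OF nd])

lemma wsigma_holo:
  assumes nd: "nondeg_periods \<omega>1 \<omega>2"
  shows "wsigma \<omega>1 \<omega>2 holomorphic_on A"
proof -
  have "(\<lambda>z. z * qf \<omega>1 \<omega>2 z) holomorphic_on UNIV"
    by (intro holomorphic_intros qf_holo[OF nd])
  hence "wsigma \<omega>1 \<omega>2 holomorphic_on UNIV" by (simp add: wsigma_eq[OF nd, abs_def])
  thus ?thesis by (rule holomorphic_on_subset) auto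
qed

lemma Efac_neg: "Efac z (-w) = Efac (-z) w"
  by (simp add: Efac_def)

lemma latt_neg: "latt \<omega>1 \<omega>2 (- fst q, - snd q) = - latt \<omega>1 \<omega>2 q"
  by (simp add: latt_def algebra_simps)

lemma Qp_even: "Qp \<omega>1 \<omega>2 N (-z) = Qp \<omega>1 \<omega>2 N z"
  unfolding Qp_def
proof (rule prod.reindex_bij_witness[where i = "\<lambda>q. (- fst q, - snd q)" and j = "\<lambda>q. (- fst q, - snd q)"])
  fix q assume q: "q \<in> sqr N - {(0,0)}"
  show "(- fst q, - snd q) \<in> sqr N - {(0,0)}" using q by (auto simp: sqr_def)
  show "Efac z (latt \<omega>1 \<omega>2 (- fst q, - snd q)) = Efac (-z) (latt \<omega>1 \<omega>2 q)"
    by (simp add: latt_neg Efac_neg)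
qed (auto simp: sqr_def)

lemma wsigma_odd:
  assumes nd: "nondeg_periods \<omega>1 \<omega>2"
  shows "wsigma \<omega>1 \<omega>2 (-z) = - wsigma \<omega>1 \<omega>2 z"
  unfolding wsigma_eq[OF nd] qf_def Qp_even by simp

definition Gf :: "(complex \<Rightarrow> complex) \<Rightarrow> complex \<Rightarrow> complex \<Rightarrow> complex" where
  "Gf sg \<alpha> u = sg (u + \<alpha>) / sg (u - \<alpha>)"

lemma bigF_Gf: "bigF \<omega>1 \<omega>2 \<alpha> p =
   Gf (wsigma \<omega>1 \<omega>2) \<alpha> (fst p + snd p) * Gf (wsigma \<omega>1 \<omega>2) \<alpha> (fst p - snd p)"
  by (simp add: bigF_def Gf_def)

lemma hol_shift: "sg holomorphic_on UNIV \<Longrightarrow> (\<lambda>u. sg (u + c)) holomorphic_on S"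
proof -
  assume h: "sg holomorphic_on UNIV"
  have "(sg \<circ> (\<lambda>u. u + c)) holomorphic_on S"
    by (intro holomorphic_on_compose holomorphic_intros holomorphic_on_subset[OF h]) auto
  thus ?thesis by (simp add: o_def)
qed

lemma hol_shift_minus: "sg holomorphic_on UNIV \<Longrightarrow> (\<lambda>u. sg (u - c)) holomorphic_on S"
proof -
  assume h: "sg holomorphic_on UNIV"
  have "(sg \<circ> (\<lambda>u. u - c)) holomorphic_on S"
    by (intro holomorphic_on_compose holomorphic_intros holomorphic_on_subset[OF h]) auto
  thus ?thesis by (simp add: o_def)
qed

lemma exp_const:
  fixes h :: "'a::topological_space \<Rightarrow> complex"
  assumes S: "connected S" and h: "continuous_on S h" and e: "\<And>x. x \<in> S \<Longrightarrow> exp (h x) = 1"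
  obtains c where "\<And>x. x \<in> S \<Longrightarrow> h x = c"
proof -
  have "h constant_on S"
  proof (rule continuous_discrete_range_constant[OF S h])
    fix x assume x: "x \<in> S"
    show "\<exists>e>0. \<forall>y. y \<in> S \<and> h y \<noteq> h x \<longrightarrow> e \<le> norm (h y - h x)"
    proof (intro exI[of _ "2 * pi"] conjI allI impI)
      fix y assume y: "y \<in> S \<and> h y \<noteq> h x"
      have "exp (h y - h x) = exp (h y) / exp (h x)" by (rule exp_diff)
      hence "exp (h y - h x) = 1" using e[of x] e[of y] x y by simp
      then obtain n :: int where n: "Im (h y - h x) = of_int (2 * n) * pi"
        by (auto simp: exp_eq_1)
      have "Re (h y - h x) = 0" using \<open>exp (h y - h x) = 1\<close> by (auto simp: exp_eq_1)
      have "n \<noteq> 0"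
      proof
        assume "n = 0"
        hence "h y - h x = 0" using n \<open>Re (h y - h x) = 0\<close> by (simp add: complex_eq_iff)
        thus False using y by simp
      qed
      hence "1 \<le> \<bar>real_of_int n\<bar>" by linarith
      hence "2 * pi \<le> 2 * pi * \<bar>real_of_int n\<bar>" by simp
      also have "\<dots> = \<bar>Im (h y - h x)\<bar>" using n by (simp add: abs_mult)
      also have "\<dots> \<le> norm (h y - h x)" by (rule abs_Im_le_cmod)
      finally show "2 * pi \<le> norm (h y - h x)" .
    qed auto
  qed
  thus ?thesis using that by (auto simp: constant_on_def)
qed

lemma loglocal:
  assumes sgh: "sg holomorphic_on UNIV" and n1: "sg (u0 + \<alpha>) \<noteq> 0" and n2: "sg (u0 - \<alpha>) \<noteq> 0"
  obtains r L L' Lh where "r > 0"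
    "\<And>u. u \<in> ball u0 r \<Longrightarrow> sg (u + \<alpha>) \<noteq> 0 \<and> sg (u - \<alpha>) \<noteq> 0"
    "\<And>u. u \<in> ball u0 r \<Longrightarrow> exp (L u) = Gf sg \<alpha> u"
    "\<And>u. u \<in> ball u0 r \<Longrightarrow> (L has_field_derivative L' u) (at u)"
    "\<And>u. u \<in> ball u0 r \<Longrightarrow> (Lh has_field_derivative L u) (at u)"
    "continuous_on (ball u0 r) L"
proof -
  have c1: "continuous_on UNIV (\<lambda>u. sg (u + \<alpha>) * sg (u - \<alpha>))"
    by (rule holomorphic_on_imp_continuous_on, rule holomorphic_on_mult[OF hol_shift[OF sgh] hol_shift_minus[OF sgh]])
  have "open {u. sg (u + \<alpha>) * sg (u - \<alpha>) \<noteq> 0}"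
    by (rule open_Collect_neq[OF c1]) auto
  moreover have "u0 \<in> {u. sg (u + \<alpha>) * sg (u - \<alpha>) \<noteq> 0}" using n1 n2 by simp
  ultimately obtain r where r: "r > 0" "ball u0 r \<subseteq> {u. sg (u + \<alpha>) * sg (u - \<alpha>) \<noteq> 0}"
    using open_contains_ball by blast
  have nz: "sg (u + \<alpha>) \<noteq> 0 \<and> sg (u - \<alpha>) \<noteq> 0" if "u \<in> ball u0 r" for u
    using r(2) that by auto
  have Gh: "Gf sg \<alpha> holomorphic_on ball u0 r"
    unfolding Gf_def[abs_def]
    by (rule holomorphic_on_divide[OF hol_shift[OF sgh] hol_shift_minus[OF sgh]]) (use nz in blast)
  obtain L where L: "L holomorphic_on ball u0 r" "\<And>u. u \<in> ball u0 r \<Longrightarrow> Gf sg \<alpha> u = exp (L u)"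
  proof (rule contractible_imp_holomorphic_log[OF Gh convex_imp_contractible[OF convex_ball]])
    fix u assume "u \<in> ball u0 r"
    thus "Gf sg \<alpha> u \<noteq> 0" using nz by (simp add: Gf_def)
  qed blast
  obtain Lh where Lh: "\<And>u. u \<in> ball u0 r \<Longrightarrow> (Lh has_field_derivative L u) (at u within ball u0 r)"
    using holomorphic_convex_primitive'[OF convex_ball open_ball L(1)] by blast
  have A1: "exp (L u) = Gf sg \<alpha> u" if u: "u \<in> ball u0 r" for u using L(2)[OF u] by simp
  have A2: "(L has_field_derivative deriv L u) (at u)" if u: "u \<in> ball u0 r" for u
    by (rule holomorphic_derivI[OF L(1) open_ball u])
  have A3: "(Lh has_field_derivative L u) (at u)" if u: "u \<in> ball u0 r" for u
  proof -
    have e: "at u within ball u0 r = at u" by (rule at_within_open[OF u open_ball])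
    show ?thesis using Lh[OF u] unfolding e .
  qed
  have A4: "continuous_on (ball u0 r) L" by (rule holomorphic_on_imp_continuous_on[OF L(1)])
  show ?thesis by (rule that[OF r(1) nz A1 A2 A3 A4])
qed

lemma Ginv:
  assumes odd: "\<And>z. sg (- z) = - sg z" and n1: "sg (d + \<alpha>) \<noteq> 0" and n2: "sg (d - \<alpha>) \<noteq> 0"
  shows "Gf sg \<alpha> (- d) * Gf sg \<alpha> d = 1"
proof -
  have m1: "- d + \<alpha> = - (d - \<alpha>)" by simp
  have e1: "sg (- d + \<alpha>) = - sg (d - \<alpha>)" unfolding m1 by (rule odd)
  have m2: "- d - \<alpha> = - (d + \<alpha>)" by simp
  have e2: "sg (- d - \<alpha>) = - sg (d + \<alpha>)" unfolding m2 by (rule odd)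
  show ?thesis unfolding Gf_def e1 e2 using n1 n2 by (simp add: field_simps)
qed

lemma dist_add_lt: "x \<in> ball a e \<Longrightarrow> y \<in> ball b e \<Longrightarrow> x + y \<in> ball (a + b) (2 * e)"
  for a b x y :: complex
proof -
  assume x: "x \<in> ball a e" and y: "y \<in> ball b e"
  have "norm ((a + b) - (x + y)) = norm ((a - x) + (b - y))" by (simp add: algebra_simps)
  also have "\<dots> \<le> norm (a - x) + norm (b - y)" by (rule norm_triangle_ineq)
  also have "\<dots> < 2 * e" using x y by (simp add: dist_norm)
  finally show ?thesis by (simp add: dist_norm)
qed

lemma dist_diff_lt: "x \<in> ball a e \<Longrightarrow> y \<in> ball b e \<Longrightarrow> x - y \<in> ball (a - b) (2 * e)"
  for a b x y :: complex
proof -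
  assume x: "x \<in> ball a e" and y: "y \<in> ball b e"
  have "norm ((a - b) - (x - y)) = norm ((a - x) - (b - y))" by (simp add: algebra_simps)
  also have "\<dots> \<le> norm (a - x) + norm (b - y)" by (rule norm_triangle_ineq4)
  also have "\<dots> < 2 * e" using x y by (simp add: dist_norm)
  finally show ?thesis by (simp add: dist_norm)
qed

lemma core:
  fixes f :: "complex \<times> complex \<Rightarrow> complex"
  assumes sgh: "sg holomorphic_on UNIV" and odd: "\<And>z. sg (- z) = - sg z"
    and U: "open U" and fc: "continuous_on U f"
    and FU: "\<And>p. p \<in> U \<Longrightarrow> Gf sg \<alpha> (fst p + snd p) * Gf sg \<alpha> (fst p - snd p) \<noteq> 0 \<and>
                 exp (2 * f p) = Gf sg \<alpha> (fst p + snd p) * Gf sg \<alpha> (fst p - snd p)"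
    and sw: "prod.swap ` U = U" and ab: "(a, b) \<in> U"
  obtains \<epsilon> A B c1 c2 A' Ah B' Bh where "\<epsilon> > 0" "ball a \<epsilon> \<times> ball b \<epsilon> \<subseteq> U"
    "a \<noteq> b \<Longrightarrow> 2 * \<epsilon> \<le> dist a b"
    "\<And>x y. x \<in> ball a \<epsilon> \<Longrightarrow> y \<in> ball b \<epsilon> \<Longrightarrow> 2 * f (x, y) = A (x + y) + B (x - y) + c1"
    "\<And>x y. x \<in> ball a \<epsilon> \<Longrightarrow> y \<in> ball b \<epsilon> \<Longrightarrow> 2 * f (y, x) = A (x + y) - B (x - y) + c2"
    "\<And>u. u \<in> ball (a + b) (2 * \<epsilon>) \<Longrightarrow> (A has_field_derivative A' u) (at u)"
    "\<And>u. u \<in> ball (a + b) (2 * \<epsilon>) \<Longrightarrow> (Ah has_field_derivative A u) (at u)"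
    "\<And>u. u \<in> ball (a - b) (2 * \<epsilon>) \<Longrightarrow> (B has_field_derivative B' u) (at u)"
    "\<And>u. u \<in> ball (a - b) (2 * \<epsilon>) \<Longrightarrow> (Bh has_field_derivative B u) (at u)"
proof -
  have F0: "Gf sg \<alpha> (a + b) * Gf sg \<alpha> (a - b) \<noteq> 0" using FU[OF ab] by simp
  hence nz: "sg (a + b + \<alpha>) \<noteq> 0" "sg (a + b - \<alpha>) \<noteq> 0" "sg (a - b + \<alpha>) \<noteq> 0" "sg (a - b - \<alpha>) \<noteq> 0"
    by (auto simp: Gf_def)
  obtain r1 A A' Ah where r1: "r1 > 0"
    "\<And>u. u \<in> ball (a + b) r1 \<Longrightarrow> sg (u + \<alpha>) \<noteq> 0 \<and> sg (u - \<alpha>) \<noteq> 0"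
    "\<And>u. u \<in> ball (a + b) r1 \<Longrightarrow> exp (A u) = Gf sg \<alpha> u"
    "\<And>u. u \<in> ball (a + b) r1 \<Longrightarrow> (A has_field_derivative A' u) (at u)"
    "\<And>u. u \<in> ball (a + b) r1 \<Longrightarrow> (Ah has_field_derivative A u) (at u)"
    "continuous_on (ball (a + b) r1) A"
    using loglocal[OF sgh nz(1) nz(2)] by blast
  obtain r2 B B' Bh where r2: "r2 > 0"
    "\<And>u. u \<in> ball (a - b) r2 \<Longrightarrow> sg (u + \<alpha>) \<noteq> 0 \<and> sg (u - \<alpha>) \<noteq> 0"
    "\<And>u. u \<in> ball (a - b) r2 \<Longrightarrow> exp (B u) = Gf sg \<alpha> u"
    "\<And>u. u \<in> ball (a - b) r2 \<Longrightarrow> (B has_field_derivative B' u) (at u)"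
    "\<And>u. u \<in> ball (a - b) r2 \<Longrightarrow> (Bh has_field_derivative B u) (at u)"
    "continuous_on (ball (a - b) r2) B"
    using loglocal[OF sgh nz(3) nz(4)] by blast
  obtain P0 Q0 where PQ: "open P0" "open Q0" "(a, b) \<in> P0 \<times> Q0" "P0 \<times> Q0 \<subseteq> U"
    using open_prod_elim[OF U ab] by blast
  obtain e1 where e1: "e1 > 0" "ball a e1 \<subseteq> P0" using PQ(1,3) open_contains_ball by blast
  obtain e2 where e2: "e2 > 0" "ball b e2 \<subseteq> Q0" using PQ(2,3) open_contains_ball by blast
  define \<epsilon> where "\<epsilon> = min (min e1 e2) (min (min (r1/2) (r2/2)) (if a = b then 1 else dist a b / 2))"
  have ifp: "(if a = b then 1 else dist a b / 2) > 0" by simp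
  have ep: "\<epsilon> > 0" unfolding \<epsilon>_def using e1(1) e2(1) r1(1) r2(1) ifp by linarith
  have eps1: "\<epsilon> \<le> e1" "\<epsilon> \<le> e2" "2 * \<epsilon> \<le> r1" "2 * \<epsilon> \<le> r2" unfolding \<epsilon>_def by linarith+
  have eps2: "2 * \<epsilon> \<le> dist a b" if "a \<noteq> b"
  proof -
    have "\<epsilon> \<le> (if a = b then 1 else dist a b / 2)" unfolding \<epsilon>_def by linarith
    thus ?thesis using that by simp
  qed
  have V1: "ball a \<epsilon> \<times> ball b \<epsilon> \<subseteq> U"
  proof -
    have "ball a \<epsilon> \<subseteq> P0" using subset_ball[OF eps1(1), of a] e1(2) by (rule order.trans)
    moreover have "ball b \<epsilon> \<subseteq> Q0" using subset_ball[OF eps1(2), of b] e2(2) by (rule order.trans)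
    ultimately show ?thesis using PQ(4) by blast
  qed
  have bs1: "ball (a + b) (2 * \<epsilon>) \<subseteq> ball (a + b) r1" using eps1 by (simp add: subset_ball)
  have bs2: "ball (a - b) (2 * \<epsilon>) \<subseteq> ball (a - b) r2" using eps1 by (simp add: subset_ball)
  have sp: "fst q + snd q \<in> ball (a + b) r1" if "q \<in> ball a \<epsilon> \<times> ball b \<epsilon>" for q
    using dist_add_lt[of "fst q" a \<epsilon> "snd q" b] that bs1 by (auto simp: mem_Times_iff)
  have dp: "fst q - snd q \<in> ball (a - b) r2" if "q \<in> ball a \<epsilon> \<times> ball b \<epsilon>" for q
    using dist_diff_lt[of "fst q" a \<epsilon> "snd q" b] that bs2 by (auto simp: mem_Times_iff)
  have conn: "connected (ball a \<epsilon> \<times> ball b \<epsilon>)"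
    by (intro convex_connected convex_Times convex_ball)
  have cA: "continuous_on (ball a \<epsilon> \<times> ball b \<epsilon>) (\<lambda>q. A (fst q + snd q))"
    by (rule continuous_on_compose2[OF r1(6)]) (auto intro!: continuous_intros sp)
  have cB: "continuous_on (ball a \<epsilon> \<times> ball b \<epsilon>) (\<lambda>q. B (fst q - snd q))"
    by (rule continuous_on_compose2[OF r2(6)]) (auto intro!: continuous_intros dp)
  have cf: "continuous_on (ball a \<epsilon> \<times> ball b \<epsilon>) f"
    by (rule continuous_on_subset[OF fc V1])
  have swU: "(snd q, fst q) \<in> U" if "q \<in> U" for q
  proof -
    have "prod.swap q \<in> prod.swap ` U" using that by blast
    thus ?thesis using sw by (simp add: prod.swap_def)
  qed
  have cfs: "continuous_on (ball a \<epsilon> \<times> ball b \<epsilon>) (\<lambda>q. f (snd q, fst q))"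
  proof (rule continuous_on_compose2[OF fc])
    show "continuous_on (ball a \<epsilon> \<times> ball b \<epsilon>) (\<lambda>q. (snd q, fst q))"
      by (intro continuous_intros)
    show "(\<lambda>q. (snd q, fst q)) ` (ball a \<epsilon> \<times> ball b \<epsilon>) \<subseteq> U"
    proof
      fix z assume "z \<in> (\<lambda>q. (snd q, fst q)) ` (ball a \<epsilon> \<times> ball b \<epsilon>)"
      then obtain q where q: "q \<in> ball a \<epsilon> \<times> ball b \<epsilon>" and z: "z = (snd q, fst q)" by blast
      have "q \<in> U" using q V1 by blast
      thus "z \<in> U" using swU z by blast
    qed
  qed
  define h1 where "h1 = (\<lambda>q. 2 * f q - A (fst q + snd q) - B (fst q - snd q))"
  have ch1: "continuous_on (ball a \<epsilon> \<times> ball b \<epsilon>) h1"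
    unfolding h1_def by (intro continuous_intros cf cA cB)
  have eh1: "exp (h1 q) = 1" if q: "q \<in> ball a \<epsilon> \<times> ball b \<epsilon>" for q
  proof -
    have qU: "q \<in> U" using q V1 by blast
    have "exp (h1 q) = exp (2 * f q) / exp (A (fst q + snd q)) / exp (B (fst q - snd q))"
      unfolding h1_def by (simp add: exp_diff)
    also have "\<dots> = 1"
      using FU[OF qU] r1(3)[OF sp[OF q]] r2(3)[OF dp[OF q]] by simp
    finally show ?thesis .
  qed
  obtain c1 where c1: "\<And>q. q \<in> ball a \<epsilon> \<times> ball b \<epsilon> \<Longrightarrow> h1 q = c1"
    using exp_const[OF conn ch1 eh1] by blast
  define h2 where "h2 = (\<lambda>q. 2 * f (snd q, fst q) - A (fst q + snd q) + B (fst q - snd q))"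
  have ch2: "continuous_on (ball a \<epsilon> \<times> ball b \<epsilon>) h2"
    unfolding h2_def by (intro continuous_intros cfs cA cB)
  have eh2: "exp (h2 q) = 1" if q: "q \<in> ball a \<epsilon> \<times> ball b \<epsilon>" for q
  proof -
    have qU: "(snd q, fst q) \<in> U" using q V1 swU by blast
    have d: "sg (fst q - snd q + \<alpha>) \<noteq> 0 \<and> sg (fst q - snd q - \<alpha>) \<noteq> 0"
      by (rule r2(2)[OF dp[OF q]])
    have gi: "Gf sg \<alpha> (- (fst q - snd q)) * Gf sg \<alpha> (fst q - snd q) = 1"
      using Ginv[OF odd d[THEN conjunct1] d[THEN conjunct2]] .
    have "exp (h2 q) = exp (2 * f (snd q, fst q)) / exp (A (fst q + snd q)) * exp (B (fst q - snd q))"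
      unfolding h2_def by (simp add: exp_diff exp_add)
    also have "\<dots> = Gf sg \<alpha> (snd q + fst q) * Gf sg \<alpha> (snd q - fst q) / Gf sg \<alpha> (fst q + snd q)
                     * Gf sg \<alpha> (fst q - snd q)"
      using FU[OF qU] r1(3)[OF sp[OF q]] r2(3)[OF dp[OF q]] by simp
    also have "\<dots> = Gf sg \<alpha> (- (fst q - snd q)) * Gf sg \<alpha> (fst q - snd q) *
                    (Gf sg \<alpha> (fst q + snd q) / Gf sg \<alpha> (fst q + snd q))"
      by (simp add: add.commute)
    also have "\<dots> = 1"
      using gi FU[OF qU] by (simp add: add.commute)
    finally show ?thesis .
  qed
  obtain c2 where c2: "\<And>q. q \<in> ball a \<epsilon> \<times> ball b \<epsilon> \<Longrightarrow> h2 q = c2"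
    using exp_const[OF conn ch2 eh2] by blast
  show ?thesis
  proof (rule that[OF ep V1 eps2])
    fix x y assume x: "x \<in> ball a \<epsilon>" and y: "y \<in> ball b \<epsilon>"
    have q: "(x, y) \<in> ball a \<epsilon> \<times> ball b \<epsilon>" using x y by simp
    show "2 * f (x, y) = A (x + y) + B (x - y) + c1"
      using c1[OF q] unfolding h1_def by (simp add: algebra_simps)
    show "2 * f (y, x) = A (x + y) - B (x - y) + c2"
      using c2[OF q] unfolding h2_def by (simp add: algebra_simps)
  next
    fix u assume "u \<in> ball (a + b) (2 * \<epsilon>)"
    hence u: "u \<in> ball (a + b) r1" using bs1 by blast
    show "(A has_field_derivative A' u) (at u)" by (rule r1(4)[OF u])
    show "(Ah has_field_derivative A u) (at u)" by (rule r1(5)[OF u])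
  next
    fix u assume "u \<in> ball (a - b) (2 * \<epsilon>)"
    hence u: "u \<in> ball (a - b) r2" using bs2 by blast
    show "(B has_field_derivative B' u) (at u)" by (rule r2(4)[OF u])
    show "(Bh has_field_derivative B u) (at u)" by (rule r2(5)[OF u])
  qed
qed

lemma partA1:
  fixes f :: "complex \<times> complex \<Rightarrow> complex"
  assumes sgh: "sg holomorphic_on UNIV" and odd: "\<And>z. sg (- z) = - sg z"
    and U: "open U" and fc: "continuous_on U f"
    and FU: "\<And>p. p \<in> U \<Longrightarrow> Gf sg \<alpha> (fst p + snd p) * Gf sg \<alpha> (fst p - snd p) \<noteq> 0 \<and>
                 exp (2 * f p) = Gf sg \<alpha> (fst p + snd p) * Gf sg \<alpha> (fst p - snd p)"
    and sw: "prod.swap ` U = U" and ab: "(a, b) \<in> U"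
  shows "\<exists>D. ((\<lambda>y. f (a, y)) has_field_derivative D) (at b) \<and>
              ((\<lambda>y. f (b, y)) has_field_derivative D) (at a)"
proof -
  show ?thesis
    apply (rule core[OF sgh odd U fc FU sw ab])
     apply assumption
    subgoal premises C0 for \<epsilon> A B c1 c2 A' Ah B' Bh
    proof -
  note C = C0(1,2,4,5,6,8)
  have a0: "a \<in> ball a \<epsilon>" and b0: "b \<in> ball b \<epsilon>" using C(1) by auto
  have dA: "(A has_field_derivative A' (a + b)) (at (a + b))" by (rule C(5)) (use C(1) in simp)
  have dB: "(B has_field_derivative B' (a - b)) (at (a - b))" by (rule C(6)) (use C(1) in simp)
  have i1: "((\<lambda>y. a + y) has_field_derivative 1) (at b)" by (auto intro!: derivative_eq_intros)
  have i2: "((\<lambda>y. a - y) has_field_derivative -1) (at b)" by (auto intro!: derivative_eq_intros)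
  have i3: "((\<lambda>y. y + b) has_field_derivative 1) (at a)" by (auto intro!: derivative_eq_intros)
  have i4: "((\<lambda>y. y - b) has_field_derivative 1) (at a)" by (auto intro!: derivative_eq_intros)
  have g1: "((\<lambda>y. A (a + y)) has_field_derivative A' (a + b) * 1) (at b)"
    using DERIV_chain2[OF _ i1, of A "A' (a + b)"] dA by simp
  have g2: "((\<lambda>y. B (a - y)) has_field_derivative B' (a - b) * (-1)) (at b)"
    using DERIV_chain2[OF _ i2, of B "B' (a - b)"] dB by simp
  have g3: "((\<lambda>y. A (y + b)) has_field_derivative A' (a + b) * 1) (at a)"
    using DERIV_chain2[OF _ i3, of A "A' (a + b)"] dA by simp
  have g4: "((\<lambda>y. B (y - b)) has_field_derivative B' (a - b) * 1) (at a)"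
    using DERIV_chain2[OF _ i4, of B "B' (a - b)"] dB by simp
  have h1: "((\<lambda>y. (A (a + y) + B (a - y) + c1) / 2) has_field_derivative
              (A' (a + b) * 1 + B' (a - b) * (-1) + 0) / 2) (at b)"
    by (intro DERIV_cdivide DERIV_add g1 g2 DERIV_const)
  have h2: "((\<lambda>y. (A (y + b) - B (y - b) + c2) / 2) has_field_derivative
              (A' (a + b) * 1 - B' (a - b) * 1 + 0) / 2) (at a)"
    by (intro DERIV_cdivide DERIV_add DERIV_diff g3 g4 DERIV_const)
  have k1: "((\<lambda>y. f (a, y)) has_field_derivative (A' (a + b) - B' (a - b)) / 2) (at b)"
  proof (rule has_field_derivative_transform_within_open[OF _ open_ball b0])
    show "((\<lambda>y. (A (a + y) + B (a - y) + c1) / 2) has_field_derivative (A' (a + b) - B' (a - b)) / 2) (at b)"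
      using h1 by simp
    fix y assume "y \<in> ball b \<epsilon>"
    thus "(A (a + y) + B (a - y) + c1) / 2 = f (a, y)" using C(3)[OF a0, of y] by (simp add: field_simps)
  qed
  have k2: "((\<lambda>y. f (b, y)) has_field_derivative (A' (a + b) - B' (a - b)) / 2) (at a)"
  proof (rule has_field_derivative_transform_within_open[OF _ open_ball a0])
    show "((\<lambda>y. (A (y + b) - B (y - b) + c2) / 2) has_field_derivative (A' (a + b) - B' (a - b)) / 2) (at a)"
      using h2 by simp
    fix y assume "y \<in> ball a \<epsilon>"
    thus "(A (y + b) - B (y - b) + c2) / 2 = f (b, y)" using C(4)[OF _ b0, of y] by (simp add: field_simps)
  qed
  show ?thesis using k1 k2 by blast
    qed
    done
qed

lemma swap_times_un: "prod.swap ` (S \<times> T \<union> T \<times> S) = S \<times> T \<union> T \<times> S"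
proof
  show "prod.swap ` (S \<times> T \<union> T \<times> S) \<subseteq> S \<times> T \<union> T \<times> S" by auto
  show "S \<times> T \<union> T \<times> S \<subseteq> prod.swap ` (S \<times> T \<union> T \<times> S)"
  proof
    fix z assume z: "z \<in> S \<times> T \<union> T \<times> S"
    hence "prod.swap z \<in> S \<times> T \<union> T \<times> S" by (cases z) auto
    moreover have "z = prod.swap (prod.swap z)" by simp
    ultimately show "z \<in> prod.swap ` (S \<times> T \<union> T \<times> S)" by (rule rev_image_eqI)
  qed
qed

lemma partA2:
  fixes f :: "complex \<times> complex \<Rightarrow> complex"
  assumes sgh: "sg holomorphic_on UNIV" and odd: "\<And>z. sg (- z) = - sg z"
    and U: "open U" and fc: "continuous_on U f"
    and FU: "\<And>p. p \<in> U \<Longrightarrow> Gf sg \<alpha> (fst p + snd p) * Gf sg \<alpha> (fst p - snd p) \<noteq> 0 \<and>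
                 exp (2 * f p) = Gf sg \<alpha> (fst p + snd p) * Gf sg \<alpha> (fst p - snd p)"
    and sw: "prod.swap ` U = U" and ab: "(a, b) \<in> U"
  shows "\<exists>V \<Lambda>. open V \<and> (a, b) \<in> V \<and> V \<subseteq> U \<and> prod.swap ` V = V \<and>
         (\<forall>q\<in>V. \<Lambda> q = \<Lambda> (prod.swap q)) \<and>
         (\<forall>x y. (x, y) \<in> V \<longrightarrow> ((\<lambda>t. \<Lambda> (t, y)) has_field_derivative f (x, y)) (at x))"
  apply (rule core[OF sgh odd U fc FU sw ab])
   apply assumption
  subgoal premises C for \<epsilon> A B c1 c2 A' Ah B' Bh
  proof -
    define P where "P = (\<lambda>q. (Ah (fst q + snd q) + Bh (fst q - snd q) + c1 * fst q + c2 * snd q) / 2)"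
    have dP1: "((\<lambda>t. P (t, y)) has_field_derivative f (x, y)) (at x)"
      if x: "x \<in> ball a \<epsilon>" and y: "y \<in> ball b \<epsilon>" for x y
    proof -
      have s: "x + y \<in> ball (a + b) (2 * \<epsilon>)" by (rule dist_add_lt[OF x y])
      have d: "x - y \<in> ball (a - b) (2 * \<epsilon>)" by (rule dist_diff_lt[OF x y])
      have i1: "((\<lambda>t. t + y) has_field_derivative 1) (at x)" by (auto intro!: derivative_eq_intros)
      have i2: "((\<lambda>t. t - y) has_field_derivative 1) (at x)" by (auto intro!: derivative_eq_intros)
      have g1: "((\<lambda>t. Ah (t + y)) has_field_derivative A (x + y) * 1) (at x)"
        using DERIV_chain2[OF _ i1, of Ah "A (x + y)"] C(7)[OF s] by simp
      have g2: "((\<lambda>t. Bh (t - y)) has_field_derivative B (x - y) * 1) (at x)"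
        using DERIV_chain2[OF _ i2, of Bh "B (x - y)"] C(9)[OF d] by simp
      have "((\<lambda>t. (Ah (t + y) + Bh (t - y) + c1 * t + c2 * y) / 2) has_field_derivative
              (A (x + y) * 1 + B (x - y) * 1 + c1 * 1 + 0) / 2) (at x)"
        by (intro DERIV_cdivide DERIV_add g1 g2 DERIV_cmult DERIV_ident DERIV_const)
      moreover have "(A (x + y) * 1 + B (x - y) * 1 + c1 * 1 + 0) / 2 = f (x, y)"
        using C(4)[OF x y] by (simp add: field_simps)
      ultimately show ?thesis by (simp add: P_def)
    qed
    have dP2: "((\<lambda>t. P (x, t)) has_field_derivative f (y, x)) (at y)"
      if x: "x \<in> ball a \<epsilon>" and y: "y \<in> ball b \<epsilon>" for x y
    proof -
      have s: "x + y \<in> ball (a + b) (2 * \<epsilon>)" by (rule dist_add_lt[OF x y])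
      have d: "x - y \<in> ball (a - b) (2 * \<epsilon>)" by (rule dist_diff_lt[OF x y])
      have i1: "((\<lambda>t. x + t) has_field_derivative 1) (at y)" by (auto intro!: derivative_eq_intros)
      have i2: "((\<lambda>t. x - t) has_field_derivative -1) (at y)" by (auto intro!: derivative_eq_intros)
      have g1: "((\<lambda>t. Ah (x + t)) has_field_derivative A (x + y) * 1) (at y)"
        using DERIV_chain2[OF _ i1, of Ah "A (x + y)"] C(7)[OF s] by simp
      have g2: "((\<lambda>t. Bh (x - t)) has_field_derivative B (x - y) * (-1)) (at y)"
        using DERIV_chain2[OF _ i2, of Bh "B (x - y)"] C(9)[OF d] by simp
      have "((\<lambda>t. (Ah (x + t) + Bh (x - t) + c1 * x + c2 * t) / 2) has_field_derivative
              (A (x + y) * 1 + B (x - y) * (-1) + 0 + c2 * 1) / 2) (at y)"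
        by (intro DERIV_cdivide DERIV_add g1 g2 DERIV_cmult DERIV_ident DERIV_const)
      moreover have "(A (x + y) * 1 + B (x - y) * (-1) + 0 + c2 * 1) / 2 = f (y, x)"
        using C(5)[OF x y] by (simp add: field_simps)
      ultimately show ?thesis by (simp add: P_def)
    qed
    have V1U: "ball a \<epsilon> \<times> ball b \<epsilon> \<subseteq> U" by (rule C(2))
    have swU: "(y, x) \<in> U" if "(x, y) \<in> U" for x y
    proof -
      have "prod.swap (x, y) \<in> prod.swap ` U" using that by blast
      thus ?thesis using sw by simp
    qed
    show ?thesis
    proof (cases "a = b")
      case True
      define V where "V = ball a \<epsilon> \<times> ball a \<epsilon>"
      define \<Lambda> where "\<Lambda> = (\<lambda>q. (P q + P (snd q, fst q)) / 2)"
      show ?thesis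
      proof (intro exI[of _ V] exI[of _ \<Lambda>] conjI allI impI ballI)
        show "open V" by (simp add: V_def open_Times)
        show "(a, b) \<in> V" using C(1) True by (simp add: V_def)
        show "V \<subseteq> U" using V1U True by (simp add: V_def)
        show "prod.swap ` V = V" using swap_times_un[of "ball a \<epsilon>" "ball a \<epsilon>"] by (simp add: V_def)
        fix q assume "q \<in> V"
        show "\<Lambda> q = \<Lambda> (prod.swap q)" by (cases q) (simp add: \<Lambda>_def add.commute)
      next
        fix x y assume "(x, y) \<in> V"
        hence x: "x \<in> ball a \<epsilon>" and y: "y \<in> ball b \<epsilon>" and x': "x \<in> ball b \<epsilon>" and y': "y \<in> ball a \<epsilon>"
          using True by (auto simp: V_def)
        have "((\<lambda>t. (P (t, y) + P (y, t)) / 2) has_field_derivative (f (x, y) + f (x, y)) / 2) (at x)"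
          by (intro DERIV_cdivide DERIV_add dP1[OF x y] dP2[OF y' x'])
        thus "((\<lambda>t. \<Lambda> (t, y)) has_field_derivative f (x, y)) (at x)"
          by (simp add: \<Lambda>_def)
      qed
    next
      case False
      have disj: "ball a \<epsilon> \<inter> ball b \<epsilon> = {}"
      proof (rule ccontr)
        assume "ball a \<epsilon> \<inter> ball b \<epsilon> \<noteq> {}"
        then obtain z where z: "dist a z < \<epsilon>" "dist b z < \<epsilon>" by auto
        have "dist a b \<le> dist a z + dist b z" by (metis dist_commute dist_triangle)
        thus False using z C(3)[OF False] by linarith
      qed
      define V1 where "V1 = ball a \<epsilon> \<times> ball b \<epsilon>"
      define V where "V = ball a \<epsilon> \<times> ball b \<epsilon> \<union> ball b \<epsilon> \<times> ball a \<epsilon>"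
      define \<Lambda> where "\<Lambda> = (\<lambda>q. if q \<in> V1 then P q else P (snd q, fst q))"
      show ?thesis
      proof (intro exI[of _ V] exI[of _ \<Lambda>] conjI allI impI ballI)
        show "open V" by (simp add: V_def open_Times open_Un)
        show "(a, b) \<in> V" using C(1) by (simp add: V_def)
        show "V \<subseteq> U"
        proof
          fix q assume "q \<in> V"
          then obtain x y where q: "q = (x, y)" and
            xy: "(x \<in> ball a \<epsilon> \<and> y \<in> ball b \<epsilon>) \<or> (x \<in> ball b \<epsilon> \<and> y \<in> ball a \<epsilon>)"
            by (auto simp: V_def)
          thus "q \<in> U" using V1U swU by blast
        qed
        show "prod.swap ` V = V" unfolding V_def by (rule swap_times_un)
        fix q assume q: "q \<in> V"
        show "\<Lambda> q = \<Lambda> (prod.swap q)"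
        proof (cases "q \<in> V1")
          case True
          hence "prod.swap q \<notin> V1" using disj by (auto simp: V1_def prod.swap_def)
          thus ?thesis using True by (simp add: \<Lambda>_def prod.swap_def)
        next
          case False
          hence "prod.swap q \<in> V1" using q by (auto simp: V1_def V_def prod.swap_def)
          thus ?thesis using False by (simp add: \<Lambda>_def prod.swap_def)
        qed
      next
        fix x y assume xyV: "(x, y) \<in> V"
        show "((\<lambda>t. \<Lambda> (t, y)) has_field_derivative f (x, y)) (at x)"
        proof (cases "(x, y) \<in> V1")
          case True
          hence x: "x \<in> ball a \<epsilon>" and y: "y \<in> ball b \<epsilon>" by (auto simp: V1_def)
          show ?thesis
          proof (rule has_field_derivative_transform_within_open[OF dP1[OF x y] open_ball x])
            fix t assume "t \<in> ball a \<epsilon>"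
            thus "P (t, y) = \<Lambda> (t, y)" using y by (simp add: \<Lambda>_def V1_def)
          qed
        next
          case False
          hence x: "x \<in> ball b \<epsilon>" and y: "y \<in> ball a \<epsilon>" using xyV by (auto simp: V1_def V_def)
          show ?thesis
          proof (rule has_field_derivative_transform_within_open[OF dP2[OF y x] open_ball x])
            fix t assume t: "t \<in> ball b \<epsilon>"
            hence "t \<notin> ball a \<epsilon>" using disj by blast
            thus "P (y, t) = \<Lambda> (t, y)" by (simp add: \<Lambda>_def V1_def)
          qed
        qed
      qed
    qed
  qed
  done

lemma partB:
  fixes Q :: "('v \<times> 'v \<times> 'v \<times> 'v) set" and X :: "'v \<Rightarrow> complex"
    and U :: "complex \<Rightarrow> (complex \<times> complex) set" and f :: "complex \<Rightarrow> complex \<times> complex \<Rightarrow> complex"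
  assumes qf: "quad_faces Q black lab" and st: "interior_star Q v n w"
    and HU: "\<And>\<gamma>. open (U \<gamma>)"
    and Hsym: "\<And>\<gamma> q. q \<in> U \<gamma> \<Longrightarrow> Lam \<gamma> q = Lam \<gamma> (prod.swap q)"
    and Hder: "\<And>\<gamma> a b. (a, b) \<in> U \<gamma> \<Longrightarrow> ((\<lambda>x. Lam \<gamma> (x, b)) has_field_derivative f \<gamma> (a, b)) (at a)"
    and Hmem: "\<forall>j\<in>{1..n}. (X v, X (w (2*j))) \<in> U (lab v (w (2*j - 1)) - lab v (w (2*j + 1)))"
  shows "((\<lambda>z. action Lam lab Q (X(v := z))) has_field_derivative
         (\<Sum>j = 1..n. f (lab v (w (2*j - 1)) - lab v (w (2*j + 1))) (X v, X (w (2*j)))))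
        (at (X v))"
proof -
  have finQ: "finite Q" and labsym: "\<And>x y. lab x y = lab y x"
    and faces: "\<forall>(a, b, c, d) \<in> Q. black a \<and> \<not> black b \<and> black c \<and> \<not> black d \<and>
        distinct [a, b, c, d] \<and> lab a b = lab c d \<and> lab a d = lab b c \<and> (c, d, a, b) \<notin> Q"
    using qf by (auto simp: quad_faces_def)
  define Qv where "Qv = {q \<in> Q. fst q = v \<or> fst (snd (snd q)) = v}"
  obtain \<phi> where bij: "bij_betw \<phi> {1..n} Qv" and
    form: "\<forall>j\<in>{1..n}. \<phi> j = (v, w (2*j - 1), w (2*j), w (2*j + 1)) \<or>
                     \<phi> j = (w (2*j), w (2*j + 1), v, w (2*j - 1))"
    using st unfolding interior_star_def Qv_def by blast
  define T where "T = (\<lambda>q z. case q of (a, b, c, d) \<Rightarrow> Lam (lab a b - lab a d) ((X(v := z)) a, (X(v := z)) c))"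
  have act: "action Lam lab Q (X(v := z)) = (\<Sum>q\<in>Q. T q z)" for z
    unfolding action_def T_def by (rule refl)
  have QvQ: "Qv \<subseteq> Q" by (auto simp: Qv_def)
  have split: "(\<Sum>q\<in>Q. T q z) = (\<Sum>q\<in>Q - Qv. T q z) + (\<Sum>q\<in>Qv. T q z)" for z
    by (rule sum.subset_diff[OF QvQ finQ])
  have const: "T q z = T q (X v)" if q: "q \<in> Q - Qv" for q z
  proof -
    obtain a b c d where qq: "q = (a, b, c, d)" by (cases q) auto
    have "a \<noteq> v" "c \<noteq> v" using q by (auto simp: Qv_def qq)
    thus ?thesis by (simp add: T_def qq)
  qed
  have reidx: "(\<Sum>q\<in>Qv. T q z) = (\<Sum>j\<in>{1..n}. T (\<phi> j) z)" for z
    by (rule sum.reindex_bij_betw[OF bij, symmetric])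
  have dj: "((\<lambda>z. T (\<phi> j) z) has_field_derivative
               f (lab v (w (2*j - 1)) - lab v (w (2*j + 1))) (X v, X (w (2*j)))) (at (X v))"
    if j: "j \<in> {1..n}" for j
  proof -
    define w1 where "w1 = w (2*j - 1)"
    define w2 where "w2 = w (2*j)"
    define w3 where "w3 = w (2*j + 1)"
    define \<gamma> where "\<gamma> = lab v w1 - lab v w3"
    have mem: "(X v, X w2) \<in> U \<gamma>" using Hmem j by (simp add: \<gamma>_def w1_def w2_def w3_def)
    have inQ: "\<phi> j \<in> Q" using bij_betw_apply[OF bij j] QvQ by blast
    have "\<phi> j = (v, w1, w2, w3) \<or> \<phi> j = (w2, w3, v, w1)"
      using form j by (simp add: w1_def w2_def w3_def)
    thus ?thesis
    proof
      assume e: "\<phi> j = (v, w1, w2, w3)"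
      have "distinct [v, w1, w2, w3]" using faces inQ e by fastforce
      hence ne: "w2 \<noteq> v" by auto
      have "(\<lambda>z. T (\<phi> j) z) = (\<lambda>z. Lam \<gamma> (z, X w2))"
        using ne by (simp add: T_def e \<gamma>_def)
      thus ?thesis using Hder[OF mem] by (simp add: \<gamma>_def w1_def w2_def w3_def)
    next
      assume e: "\<phi> j = (w2, w3, v, w1)"
      have P: "distinct [w2, w3, v, w1] \<and> lab w2 w3 = lab v w1 \<and> lab w2 w1 = lab w3 v"
        using faces inQ e by fastforce
      hence ne: "w2 \<noteq> v" by auto
      have lg: "lab w2 w3 - lab w2 w1 = \<gamma>" using P labsym[of w3 v] by (simp add: \<gamma>_def)
      have fe: "(\<lambda>z. T (\<phi> j) z) = (\<lambda>z. Lam \<gamma> (X w2, z))"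
        using ne lg by (simp add: T_def e)
      define Ow where "Ow = (\<lambda>z. (z, X w2)) -` U \<gamma>"
      have oO: "open Ow" unfolding Ow_def
        by (rule open_vimage[OF HU]) (intro continuous_intros)
      have vO: "X v \<in> Ow" using mem by (simp add: Ow_def)
      have "((\<lambda>z. Lam \<gamma> (X w2, z)) has_field_derivative f \<gamma> (X v, X w2)) (at (X v))"
      proof (rule has_field_derivative_transform_within_open[OF Hder[OF mem] oO vO])
        fix z assume "z \<in> Ow"
        hence "(z, X w2) \<in> U \<gamma>" by (simp add: Ow_def)
        thus "Lam \<gamma> (z, X w2) = Lam \<gamma> (X w2, z)" using Hsym by fastforce
      qed
      thus ?thesis using fe by (simp add: \<gamma>_def w1_def w2_def w3_def)
    qed
  qed
  have D: "((\<lambda>z. (\<Sum>q\<in>Q - Qv. T q (X v)) + (\<Sum>j\<in>{1..n}. T (\<phi> j) z)) has_field_derivative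
            0 + (\<Sum>j = 1..n. f (lab v (w (2*j - 1)) - lab v (w (2*j + 1))) (X v, X (w (2*j))))) (at (X v))"
    by (intro DERIV_add DERIV_const DERIV_sum dj)
  have eq: "(\<lambda>z. action Lam lab Q (X(v := z))) =
            (\<lambda>z. (\<Sum>q\<in>Q - Qv. T q (X v)) + (\<Sum>j\<in>{1..n}. T (\<phi> j) z))"
  proof
    fix z
    have "(\<Sum>q\<in>Q - Qv. T q z) = (\<Sum>q\<in>Q - Qv. T q (X v))" by (intro sum.cong refl const)
    thus "action Lam lab Q (X(v := z)) = (\<Sum>q\<in>Q - Qv. T q (X v)) + (\<Sum>j\<in>{1..n}. T (\<phi> j) z)"
      using act split reidx by simp
  qed
  show ?thesis using D unfolding eq by simp
qed

theorem proposition4: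
  fixes \<omega>1 \<omega>2 :: complex
  assumes "nondeg_periods \<omega>1 \<omega>2"
  shows
  "(\<forall>\<alpha> U f. half_log_branch \<omega>1 \<omega>2 \<alpha> U f \<and> prod.swap ` U = U \<longrightarrow>
      (\<forall>a b. (a, b) \<in> U \<longrightarrow>
         (\<exists>D. ((\<lambda>y. f (a, y)) has_field_derivative D) (at b) \<and>
              ((\<lambda>y. f (b, y)) has_field_derivative D) (at a))) \<and>
      (\<forall>p\<in>U. \<exists>V \<Lambda>. open V \<and> p \<in> V \<and> V \<subseteq> U \<and> prod.swap ` V = V \<and>
         (\<forall>q\<in>V. \<Lambda> q = \<Lambda> (prod.swap q)) \<and>
         (\<forall>a b. (a, b) \<in> V \<longrightarrow> ((\<lambda>x. \<Lambda> (x, b)) has_field_derivative f (a, b)) (at a))))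
   \<and>
   (\<forall>(Q :: ('v \<times> 'v \<times> 'v \<times> 'v) set) black lab v n w
       (U :: complex \<Rightarrow> (complex \<times> complex) set) f Lam (X :: 'v \<Rightarrow> complex).
      quad_faces Q black lab \<and> black v \<and> interior_star Q v n w \<and>
      (\<forall>\<gamma>. half_log_branch \<omega>1 \<omega>2 \<gamma> (U \<gamma>) (f \<gamma>) \<and> prod.swap ` U \<gamma> = U \<gamma> \<and>
           (\<forall>q\<in>U \<gamma>. Lam \<gamma> q = Lam \<gamma> (prod.swap q)) \<and>
           (\<forall>a b. (a, b) \<in> U \<gamma> \<longrightarrow>
              ((\<lambda>x. Lam \<gamma> (x, b)) has_field_derivative f \<gamma> (a, b)) (at a))) \<and>
      (\<forall>j\<in>{1..n}. (X v, X (w (2*j))) \<in> U (lab v (w (2*j - 1)) - lab v (w (2*j + 1))))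
      \<longrightarrow>
      ((\<lambda>z. action Lam lab Q (X(v := z))) has_field_derivative
         (\<Sum>j = 1..n. f (lab v (w (2*j - 1)) - lab v (w (2*j + 1))) (X v, X (w (2*j)))))
        (at (X v)))"
proof -
  have sgh: "wsigma \<omega>1 \<omega>2 holomorphic_on UNIV" by (rule wsigma_holo[OF assms])
  have odd: "\<And>z. wsigma \<omega>1 \<omega>2 (- z) = - wsigma \<omega>1 \<omega>2 z" by (rule wsigma_odd[OF assms])
  show ?thesis
  proof (rule conjI)
    show "\<forall>\<alpha> U f. half_log_branch \<omega>1 \<omega>2 \<alpha> U f \<and> prod.swap ` U = U \<longrightarrow>
      (\<forall>a b. (a, b) \<in> U \<longrightarrow>
         (\<exists>D. ((\<lambda>y. f (a, y)) has_field_derivative D) (at b) \<and>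
              ((\<lambda>y. f (b, y)) has_field_derivative D) (at a))) \<and>
      (\<forall>p\<in>U. \<exists>V \<Lambda>. open V \<and> p \<in> V \<and> V \<subseteq> U \<and> prod.swap ` V = V \<and>
         (\<forall>q\<in>V. \<Lambda> q = \<Lambda> (prod.swap q)) \<and>
         (\<forall>a b. (a, b) \<in> V \<longrightarrow> ((\<lambda>x. \<Lambda> (x, b)) has_field_derivative f (a, b)) (at a)))"
    proof (intro allI impI)
      fix \<alpha> U and f :: "complex \<times> complex \<Rightarrow> complex"
      assume H: "half_log_branch \<omega>1 \<omega>2 \<alpha> U f \<and> prod.swap ` U = U"
      have U: "open U" and fc: "continuous_on U f" and sw: "prod.swap ` U = U"
        using H by (auto simp: half_log_branch_def)
      have FU: "Gf (wsigma \<omega>1 \<omega>2) \<alpha> (fst p + snd p) * Gf (wsigma \<omega>1 \<omega>2) \<alpha> (fst p - snd p) \<noteq> 0 \<and>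
                 exp (2 * f p) = Gf (wsigma \<omega>1 \<omega>2) \<alpha> (fst p + snd p) * Gf (wsigma \<omega>1 \<omega>2) \<alpha> (fst p - snd p)"
        if p: "p \<in> U" for p
        using H p unfolding half_log_branch_def bigF_Gf by blast
      show "(\<forall>a b. (a, b) \<in> U \<longrightarrow>
         (\<exists>D. ((\<lambda>y. f (a, y)) has_field_derivative D) (at b) \<and>
              ((\<lambda>y. f (b, y)) has_field_derivative D) (at a))) \<and>
      (\<forall>p\<in>U. \<exists>V \<Lambda>. open V \<and> p \<in> V \<and> V \<subseteq> U \<and> prod.swap ` V = V \<and>
         (\<forall>q\<in>V. \<Lambda> q = \<Lambda> (prod.swap q)) \<and>
         (\<forall>a b. (a, b) \<in> V \<longrightarrow> ((\<lambda>x. \<Lambda> (x, b)) has_field_derivative f (a, b)) (at a)))"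
      proof (intro conjI allI impI ballI)
        fix a b assume ab: "(a, b) \<in> U"
        show "\<exists>D. ((\<lambda>y. f (a, y)) has_field_derivative D) (at b) \<and>
              ((\<lambda>y. f (b, y)) has_field_derivative D) (at a)"
          by (rule partA1[OF sgh odd U fc FU sw ab])
      next
        fix p assume p: "p \<in> U"
        obtain a b where pab: "p = (a, b)" by (cases p) auto
        have ab: "(a, b) \<in> U" using p pab by simp
        show "\<exists>V \<Lambda>. open V \<and> p \<in> V \<and> V \<subseteq> U \<and> prod.swap ` V = V \<and>
         (\<forall>q\<in>V. \<Lambda> q = \<Lambda> (prod.swap q)) \<and>
         (\<forall>a b. (a, b) \<in> V \<longrightarrow> ((\<lambda>x. \<Lambda> (x, b)) has_field_derivative f (a, b)) (at a))"
          using partA2[OF sgh odd U fc FU sw ab] unfolding pab .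
      qed
    qed
  next
    show "\<forall>(Q :: ('v \<times> 'v \<times> 'v \<times> 'v) set) black lab v n w
       (U :: complex \<Rightarrow> (complex \<times> complex) set) f Lam (X :: 'v \<Rightarrow> complex).
      quad_faces Q black lab \<and> black v \<and> interior_star Q v n w \<and>
      (\<forall>\<gamma>. half_log_branch \<omega>1 \<omega>2 \<gamma> (U \<gamma>) (f \<gamma>) \<and> prod.swap ` U \<gamma> = U \<gamma> \<and>
           (\<forall>q\<in>U \<gamma>. Lam \<gamma> q = Lam \<gamma> (prod.swap q)) \<and>
           (\<forall>a b. (a, b) \<in> U \<gamma> \<longrightarrow>
              ((\<lambda>x. Lam \<gamma> (x, b)) has_field_derivative f \<gamma> (a, b)) (at a))) \<and>
      (\<forall>j\<in>{1..n}. (X v, X (w (2*j))) \<in> U (lab v (w (2*j - 1)) - lab v (w (2*j + 1))))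
      \<longrightarrow>
      ((\<lambda>z. action Lam lab Q (X(v := z))) has_field_derivative
         (\<Sum>j = 1..n. f (lab v (w (2*j - 1)) - lab v (w (2*j + 1))) (X v, X (w (2*j)))))
        (at (X v))"
    proof (intro allI impI)
      fix Q :: "('v \<times> 'v \<times> 'v \<times> 'v) set" and black lab v n w
        and U :: "complex \<Rightarrow> (complex \<times> complex) set" and f Lam and X :: "'v \<Rightarrow> complex"
      assume H: "quad_faces Q black lab \<and> black v \<and> interior_star Q v n w \<and>
      (\<forall>\<gamma>. half_log_branch \<omega>1 \<omega>2 \<gamma> (U \<gamma>) (f \<gamma>) \<and> prod.swap ` U \<gamma> = U \<gamma> \<and>
           (\<forall>q\<in>U \<gamma>. Lam \<gamma> q = Lam \<gamma> (prod.swap q)) \<and>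
           (\<forall>a b. (a, b) \<in> U \<gamma> \<longrightarrow>
              ((\<lambda>x. Lam \<gamma> (x, b)) has_field_derivative f \<gamma> (a, b)) (at a))) \<and>
      (\<forall>j\<in>{1..n}. (X v, X (w (2*j))) \<in> U (lab v (w (2*j - 1)) - lab v (w (2*j + 1))))"
      have qf: "quad_faces Q black lab" and st: "interior_star Q v n w"
        and Hmem: "\<forall>j\<in>{1..n}. (X v, X (w (2*j))) \<in> U (lab v (w (2*j - 1)) - lab v (w (2*j + 1)))"
        using H by blast+
      have HU: "open (U \<gamma>)" for \<gamma> using H by (simp add: half_log_branch_def)
      have Hsym: "Lam \<gamma> q = Lam \<gamma> (prod.swap q)" if "q \<in> U \<gamma>" for \<gamma> q using H that by blast
      have Hder: "((\<lambda>x. Lam \<gamma> (x, b)) has_field_derivative f \<gamma> (a, b)) (at a)"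
        if "(a, b) \<in> U \<gamma>" for \<gamma> a b using H that by blast
      show "((\<lambda>z. action Lam lab Q (X(v := z))) has_field_derivative
         (\<Sum>j = 1..n. f (lab v (w (2*j - 1)) - lab v (w (2*j + 1))) (X v, X (w (2*j)))))
        (at (X v))"
        by (rule partB[OF qf st HU Hsym Hder Hmem])
    qed
  qed
qed

end
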